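(* Let $R$ be any finite Frobenius ring and let $\mathcal{P}_{\mathrm{hom}}=P_0\mid P_1\mid\cdots\mid P_M$ be its homogeneous weight partition. Then for each generating character $\chi$ of $R$, \[ \sum_{a\in P_m}\chi(ab)=\sum_{a\in P_m}\chi(ba)\quad\text{for all } b\in R \text{ and } m=0,\ldots,M. \] As a consequence, the left and right dual partitions of $\mathcal{P}_{\mathrm{hom}}$ coincide.
   Context: $\mathcal{P}_{\mathrm{hom}}$ is the partition of $R$ into level sets of the normalized homogeneous weight $\omega$ (the unique map $R\to\mathbb{R}$ with $\omega(0)=0$, $\omega(x)=\omega(y)$ whenever $Rx=Ry$, and $\sum_{y\in Rx}\omega(y)=|Rx|$ for $x\neq0$). Characters are group homomorphisms $(R,+)\to\mathbb{C}^*$; $\widehat{R}$ is an $R$-$R$-bimodule via $(r\cdot\chi)(v)=\chi(vr)$, $(\chi\cdot r)(v)=\chi(rv)$; a generating character is $\chi$ with $\widehat{R}=R\cdot\chi$ (equivalently $\widehat{R}=\chi\cdot R$); $R$ is Frobenius iff one exists. For a partition $\mathcal{P}=P_0\mid\cdots\mid P_M$ of $R$, the left $\chi$-dual partition is given by $b\sim b'$ iff $\sum_{a\in P_m}\chi(ab)=\sum_{a\in P_m}\chi(ab')$ for all $m$, and the right $\chi$-dual by $b\sim b'$ iff $\sum_{a\in P_m}\chi(ba)=\sum_{a\in P_m}\chi(b'a)$ for all $m$. *)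

theory Defs
  imports Complex_Main
begin

text \<open>A finite ring is modelled by a type of class ring_1 and finite (not necessarily commutative).
Characters are group homomorphisms (R,+) to the multiplicative group of nonzero complex numbers.\<close>

definition character :: "('a::ring_1 \<Rightarrow> complex) \<Rightarrow> bool" where
  "character \<chi> \<longleftrightarrow> (\<forall>x. \<chi> x \<noteq> 0) \<and> (\<forall>x y. \<chi> (x + y) = \<chi> x * \<chi> y)"

text \<open>Left action (r . chi)(v) = chi(v r); chi is generating iff every character is r . chi.\<close>
definition generating_character :: "('a::ring_1 \<Rightarrow> complex) \<Rightarrow> bool" where
  "generating_character \<chi> \<longleftrightarrow> character \<chi> \<and>
     (\<forall>\<psi>. character \<psi> \<longrightarrow> (\<exists>r. \<psi> = (\<lambda>v. \<chi> (v * r))))"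

definition frobenius_ring :: "'a::ring_1 itself \<Rightarrow> bool" where
  "frobenius_ring _ \<longleftrightarrow> (\<exists>\<chi>::'a \<Rightarrow> complex. generating_character \<chi>)"

definition left_ideal_gen :: "'a::ring_1 \<Rightarrow> 'a set" where
  "left_ideal_gen x = {r * x | r. True}"

definition is_hom_weight :: "('a::{ring_1,finite} \<Rightarrow> real) \<Rightarrow> bool" where
  "is_hom_weight \<omega> \<longleftrightarrow> \<omega> 0 = 0
     \<and> (\<forall>x y. left_ideal_gen x = left_ideal_gen y \<longrightarrow> \<omega> x = \<omega> y)
     \<and> (\<forall>x. x \<noteq> 0 \<longrightarrow> (\<Sum>y\<in>left_ideal_gen x. \<omega> y) = real (card (left_ideal_gen x)))"

definition level_partition :: "('a \<Rightarrow> real) \<Rightarrow> 'a set set" where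
  "level_partition \<omega> = {{a. \<omega> a = t} | t. t \<in> range \<omega>}"

definition left_dual_rel :: "'a set set \<Rightarrow> ('a::ring_1 \<Rightarrow> complex) \<Rightarrow> 'a \<Rightarrow> 'a \<Rightarrow> bool" where
  "left_dual_rel \<P> \<chi> b b' \<longleftrightarrow>
     (\<forall>P\<in>\<P>. (\<Sum>a\<in>P. \<chi> (a * b)) = (\<Sum>a\<in>P. \<chi> (a * b')))"

definition right_dual_rel :: "'a set set \<Rightarrow> ('a::ring_1 \<Rightarrow> complex) \<Rightarrow> 'a \<Rightarrow> 'a \<Rightarrow> bool" where
  "right_dual_rel \<P> \<chi> b b' \<longleftrightarrow>
     (\<forall>P\<in>\<P>. (\<Sum>a\<in>P. \<chi> (b * a)) = (\<Sum>a\<in>P. \<chi> (b' * a)))"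

end

theory Submission
  imports Defs
begin


definition subgrp :: "'a::ring_1 set \<Rightarrow> bool" where
  "subgrp H \<longleftrightarrow> 0 \<in> H \<and> (\<forall>x\<in>H. \<forall>y\<in>H. x + y \<in> H) \<and> (\<forall>x\<in>H. -x \<in> H)"

definition pc :: "'a::ring_1 set \<Rightarrow> ('a \<Rightarrow> complex) \<Rightarrow> bool" where
  "pc H \<psi> \<longleftrightarrow> (\<forall>x\<in>H. \<psi> x \<noteq> 0) \<and> (\<forall>x\<in>H. \<forall>y\<in>H. \<psi> (x + y) = \<psi> x * \<psi> y)"

lemma subgrp_nat: "subgrp H \<Longrightarrow> h \<in> H \<Longrightarrow> of_nat n * h \<in> H"
  by (induction n) (auto simp: subgrp_def distrib_right)

lemma subgrp_int: "subgrp H \<Longrightarrow> h \<in> H \<Longrightarrow> of_int k * h \<in> H"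
proof (cases "k \<ge> 0")
  case True
  assume a: "subgrp H" "h \<in> H"
  then show ?thesis using subgrp_nat[OF a, of "nat k"] True by simp
next
  case False
  assume a: "subgrp H" "h \<in> H"
  have "of_nat (nat (-k)) * h \<in> H" using subgrp_nat[OF a] by blast
  then have "- (of_nat (nat (-k)) * h) \<in> H" using a by (simp add: subgrp_def)
  then show ?thesis using False by simp
qed

lemma pc_zero: "subgrp H \<Longrightarrow> pc H \<psi> \<Longrightarrow> \<psi> 0 = 1"
proof -
  assume a: "subgrp H" "pc H \<psi>"
  then have "0 \<in> H" "\<psi> 0 \<noteq> 0" by (auto simp: subgrp_def pc_def)
  moreover have "\<psi> (0+0) = \<psi> 0 * \<psi> 0" using a(2) \<open>0 \<in> H\<close> unfolding pc_def by blast
  ultimately show ?thesis by simp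
qed

lemma pc_nat: "subgrp H \<Longrightarrow> pc H \<psi> \<Longrightarrow> h \<in> H \<Longrightarrow> \<psi> (of_nat n * h) = \<psi> h ^ n"
proof (induction n)
  case 0 then show ?case using pc_zero by simp
next
  case (Suc n)
  have "of_nat (Suc n) * h = of_nat n * h + h" by (simp add: distrib_right)
  moreover have "of_nat n * h \<in> H" using subgrp_nat Suc by blast
  ultimately show ?case using Suc by (simp add: pc_def)
qed

lemma pc_neg: "subgrp H \<Longrightarrow> pc H \<psi> \<Longrightarrow> h \<in> H \<Longrightarrow> \<psi> (- h) = inverse (\<psi> h)"
proof -
  assume a: "subgrp H" "pc H \<psi>" "h \<in> H"
  then have "-h \<in> H" "\<psi> h \<noteq> 0" by (auto simp: subgrp_def pc_def)
  then have "\<psi> (-h + h) = \<psi> (-h) * \<psi> h" "\<psi> h \<noteq> 0" using a unfolding pc_def by blast+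
  then show ?thesis using pc_zero[OF a(1,2)] by (simp add: field_simps)
qed

lemma pc_int: "subgrp H \<Longrightarrow> pc H \<psi> \<Longrightarrow> h \<in> H \<Longrightarrow> \<psi> (of_int k * h) = \<psi> h powi k"
proof (cases "k \<ge> 0")
  case True
  assume a: "subgrp H" "pc H \<psi>" "h \<in> H"
  then show ?thesis using pc_nat[OF a, of "nat k"] True by (simp add: power_int_def)
next
  case False
  assume a: "subgrp H" "pc H \<psi>" "h \<in> H"
  have "\<psi> (- (of_nat (nat (-k)) * h)) = inverse (\<psi> h ^ nat (-k))"
    using pc_neg[OF a(1,2)] pc_nat[OF a] subgrp_nat[OF a(1,3)] by simp
  then show ?thesis using False by (simp add: power_int_def power_inverse)
qed

definition ordH :: "'a::ring_1 set \<Rightarrow> 'a \<Rightarrow> nat" where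
  "ordH H g = (LEAST k. k > 0 \<and> of_nat k * g \<in> H)"

lemma ordH_ex:
  fixes g :: "'a::{ring_1,finite}"
  assumes "subgrp H" shows "\<exists>k>0. of_nat k * g \<in> H"
proof -
  let ?f = "\<lambda>k::nat. of_nat k * g"
  have "\<not> inj ?f"
  proof
    assume "inj ?f"
    moreover have "finite (range ?f)" by simp
    ultimately have "finite (UNIV :: nat set)" using finite_imageD by blast
    then show False by simp
  qed
  then obtain a b where ab: "a \<noteq> b" "?f a = ?f b" unfolding inj_def by blast
  have "\<exists>a b. a < b \<and> ?f a = ?f b"
  proof (cases "a < b")
    case True then show ?thesis using ab by blast
  next
    case False then have "b < a" using ab by simp
    then show ?thesis using ab by metis
  qed
  then obtain a b where ab: "a < b" "?f a = ?f b" by blast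
  have "of_nat (b - a) * g = ?f b - ?f a" using ab(1) by (simp add: of_nat_diff left_diff_distrib)
  also have "\<dots> = 0" using ab by simp
  finally show ?thesis using ab(1) assms by (intro exI[of _ "b-a"]) (auto simp: subgrp_def)
qed

lemma ordH:
  fixes g :: "'a::{ring_1,finite}"
  assumes "subgrp H" shows "ordH H g > 0 \<and> of_nat (ordH H g) * g \<in> H"
  unfolding ordH_def using LeastI_ex[OF ordH_ex[OF assms]] .

lemma ordH_least:
  fixes g :: "'a::{ring_1,finite}"
  assumes "0 < k" "of_nat k * g \<in> H" shows "ordH H g \<le> k"
  unfolding ordH_def using assms by (intro Least_le) auto

lemma ordH_dvd:
  fixes g :: "'a::{ring_1,finite}"
  assumes H: "subgrp H" and j: "of_int j * g \<in> H"
  shows "int (ordH H g) dvd j"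
proof -
  define m where "m = ordH H g"
  have m: "m > 0" "of_nat m * g \<in> H" using ordH[OF H] m_def by auto
  have "of_int (j mod int m) * g = of_int j * g + - (of_int (j div int m) * (of_nat m * g))"
  proof -
    have "j mod int m = j - j div int m * int m" by (simp add: minus_div_mult_eq_mod)
    then have "(of_int (j mod int m) :: 'a) = of_int j - of_int (j div int m) * of_nat m"
      by (metis of_int_diff of_int_mult of_int_of_nat_eq)
    then show ?thesis by (metis left_diff_distrib mult.assoc diff_conv_add_uminus)
  qed
  also have "\<dots> \<in> H" using H j m subgrp_int[OF H m(2)] unfolding subgrp_def by blast
  finally have r: "of_nat (nat (j mod int m)) * g \<in> H"
    using m(1) by simp
  have "j mod int m = 0"
  proof (rule ccontr)
    assume "j mod int m \<noteq> 0"
    then have "0 < nat (j mod int m)" using m(1) by (simp add: pos_mod_sign order_neq_le_trans)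
    then have "m \<le> nat (j mod int m)" using ordH_least[OF _ r] m_def by blast
    moreover have "j mod int m < int m" using m(1) by simp
    ultimately show False using m(1) by (metis int_ops(1) le_nat_iff less_le_not_le of_nat_0_less_iff pos_mod_sign)
  qed
  then show ?thesis using m_def by (simp add: dvd_eq_mod_eq_0)
qed

definition extH :: "'a::ring_1 set \<Rightarrow> 'a \<Rightarrow> 'a set" where
  "extH H g = {h + of_int k * g | h k. h \<in> H}"

definition extC :: "'a::ring_1 set \<Rightarrow> ('a \<Rightarrow> complex) \<Rightarrow> 'a \<Rightarrow> complex \<Rightarrow> 'a \<Rightarrow> complex" where
  "extC H \<psi> g w x = (let p = (SOME p. fst p \<in> H \<and> x = fst p + of_int (snd p) * g)
                       in \<psi> (fst p) * w powi (snd p))"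

locale extsetup =
  fixes H :: "'a::{ring_1,finite} set" and \<psi> g w
  assumes H: "subgrp H" and \<psi>: "pc H \<psi>"
    and w: "w ^ ordH H g = \<psi> (of_nat (ordH H g) * g)"
begin

lemma w_nz: "w \<noteq> 0"
proof
  assume "w = 0"
  moreover have "ordH H g > 0" "of_nat (ordH H g) * g \<in> H" using ordH[OF H] by auto
  moreover have "\<psi> (of_nat (ordH H g) * g) \<noteq> 0" using \<psi> calculation(3) unfolding pc_def by blast
  ultimately show False using w by (simp add: power_0_left)
qed

lemma wd:
  assumes "h \<in> H" "h' \<in> H" "h + of_int k * g = h' + of_int k' * g"
  shows "\<psi> h * w powi k = \<psi> h' * w powi k'"
proof -
  define m where "m = ordH H g"
  have m: "m > 0" "of_nat m * g \<in> H" using ordH[OF H] m_def by auto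
  have ab: "\<And>a b c d::'a. a + b = c + d \<Longrightarrow> b - d = c - a"
    by (metis add_diff_cancel_left' add_diff_cancel_right' diff_diff_eq2 add.commute diff_add_cancel)
  have e: "of_int (k - k') * g = h' - h"
    using ab[OF assms(3)] by (simp only: of_int_diff left_diff_distrib)
  have "-h \<in> H" using assms(1) H unfolding subgrp_def by blast
  then have "h' + - h \<in> H" using assms(2) H unfolding subgrp_def by blast
  then have "of_int (k - k') * g \<in> H" using e by (simp only: diff_conv_add_uminus)
  then have "int m dvd (k - k')" using ordH_dvd[OF H] m_def by blast
  then obtain j where j: "k - k' = int m * j" by (auto simp: dvd_def)
  have "of_int j * (of_nat m * g) = of_int (k - k') * g"
    unfolding j by (simp add: mult.assoc mult_of_int_commute)
  then have "h' = h + of_int j * (of_nat m * g)"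
    using e by simp
  then have "\<psi> h' = \<psi> h * \<psi> (of_int j * (of_nat m * g))"
    using \<psi> assms(1) subgrp_int[OF H m(2)] unfolding pc_def by blast
  also have "\<psi> (of_int j * (of_nat m * g)) = (w ^ m) powi j"
    using pc_int[OF H \<psi> m(2), of j] w m_def by (simp only:)
  also have "\<dots> = w powi (k - k')" unfolding j power_int_mult power_int_of_nat by (rule refl)
  finally have "\<psi> h' = \<psi> h * w powi (k - k')" .
  moreover have "w powi k' \<noteq> 0" using w_nz by simp
  ultimately show ?thesis using w_nz by (simp add: power_int_diff)
qed

lemma rep:
  assumes "h \<in> H" "x = h + of_int k * g"
  shows "extC H \<psi> g w x = \<psi> h * w powi k"
proof -
  let ?P = "\<lambda>p. fst p \<in> H \<and> x = fst p + of_int (snd p) * g"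
  have "?P (h, k)" using assms by simp
  then have p: "?P (SOME p. ?P p)" by (rule someI)
  define p where "p = (SOME p. ?P p)"
  have "extC H \<psi> g w x = \<psi> (fst p) * w powi (snd p)" unfolding extC_def Let_def p_def ..
  also have "\<dots> = \<psi> h * w powi k"
    using wd[of "fst p" h "snd p" k] p assms unfolding p_def[symmetric] by simp
  finally show ?thesis .
qed

lemma subgrp_ext: "subgrp (extH H g)"
  unfolding subgrp_def extH_def
proof (intro conjI ballI)
  show "0 \<in> {h + of_int k * g |h k. h \<in> H}" using H by (auto simp: subgrp_def intro!: exI[of _ 0])
next
  fix x y assume "x \<in> {h + of_int k * g |h k. h \<in> H}" "y \<in> {h + of_int k * g |h k. h \<in> H}"
  then obtain h k h' k' where "h \<in> H" "h' \<in> H" "x = h + of_int k * g" "y = h' + of_int k' * g" by blast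
  moreover have "x + y = (h + h') + of_int (k + k') * g"
    using calculation by (simp add: distrib_right add_ac)
  moreover have "h + h' \<in> H" using H calculation unfolding subgrp_def by blast
  ultimately show "x + y \<in> {h + of_int k * g |h k. h \<in> H}" by blast
next
  fix x assume "x \<in> {h + of_int k * g |h k. h \<in> H}"
  then obtain h k where "h \<in> H" "x = h + of_int k * g" by blast
  moreover have "-x = (- h) + of_int (- k) * g"
    using calculation by simp
  moreover have "- h \<in> H" using H calculation unfolding subgrp_def by blast
  ultimately show "-x \<in> {h + of_int k * g |h k. h \<in> H}" by blast
qed

lemma pc_ext: "pc (extH H g) (extC H \<psi> g w)"
  unfolding pc_def
proof (intro conjI ballI)
  fix x assume "x \<in> extH H g"
  then obtain h k where hk: "h \<in> H" "x = h + of_int k * g" unfolding extH_def by blast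
  show "extC H \<psi> g w x \<noteq> 0" using rep[OF hk] hk \<psi> w_nz unfolding pc_def by simp
next
  fix x y assume "x \<in> extH H g" "y \<in> extH H g"
  then obtain h k h' k' where hk: "h \<in> H" "x = h + of_int k * g" and hk': "h' \<in> H" "y = h' + of_int k' * g"
    unfolding extH_def by blast
  have s: "h + h' \<in> H" "x + y = (h + h') + of_int (k + k') * g" using H hk hk' 
    by (auto simp: subgrp_def distrib_right add_ac)
  show "extC H \<psi> g w (x + y) = extC H \<psi> g w x * extC H \<psi> g w y"
  proof -
    have "\<psi> (h + h') = \<psi> h * \<psi> h'" using \<psi> hk(1) hk'(1) unfolding pc_def by blast
    then show ?thesis using rep[OF s] rep[OF hk] rep[OF hk'] w_nz
      by (simp add: power_int_add mult_ac)
  qed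
qed

lemma ext_extends: "h \<in> H \<Longrightarrow> extC H \<psi> g w h = \<psi> h"
  using rep[of h h 0] by simp

lemma ext_g: "extC H \<psi> g w g = w"
  using rep[of 0 g 1] H pc_zero[OF H \<psi>] by (simp add: subgrp_def)

lemma H_sub: "H \<subseteq> extH H g"
proof
  fix x assume "x \<in> H" then have "x = x + of_int 0 * g \<and> x \<in> H" by simp
  then show "x \<in> extH H g" unfolding extH_def by blast
qed

lemma g_in: "g \<in> extH H g"
proof -
  have "g = 0 + of_int 1 * g \<and> (0::'a) \<in> H" using H by (simp add: subgrp_def)
  then show ?thesis unfolding extH_def by blast
qed

end


lemma nth_root_ex:
  fixes c :: complex assumes "c \<noteq> 0" "n > 0" shows "\<exists>w. w ^ n = c"
proof -
  from bij_betw_nth_root_unity[OF assms] obtain c' where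
    "(\<lambda>z. c' * z) ` {z. z ^ n = 1} = {z. z ^ n = c}" unfolding bij_betw_def by blast
  moreover have "(1::complex) \<in> {z. z ^ n = 1}" by simp
  ultimately have "c' * 1 \<in> {z. z ^ n = c}" by blast
  then show ?thesis by blast
qed

lemma root_unity_ne1:
  assumes "n \<ge> 2" shows "\<exists>w::complex. w ^ n = 1 \<and> w \<noteq> 1"
proof (rule ccontr)
  assume "\<not> ?thesis"
  then have "{z::complex. z ^ n = 1} \<subseteq> {1}" by auto
  then have "card {z::complex. z ^ n = 1} \<le> 1" using card_mono[of "{1::complex}"] by fastforce
  then show False using card_roots_unity_eq[of n] assms by simp
qed

lemma extend_full:
  fixes H :: "'a::{ring_1,finite} set"
  shows "subgrp H \<Longrightarrow> pc H \<psi> \<Longrightarrow> \<exists>\<Psi>. pc UNIV \<Psi> \<and> (\<forall>x\<in>H. \<Psi> x = \<psi> x)"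
proof (induction "card (UNIV - H)" arbitrary: H \<psi> rule: less_induct)
  case less
  show ?case
  proof (cases "H = UNIV")
    case True then show ?thesis using less by auto
  next
    case False
    then obtain g where g: "g \<notin> H" by blast
    define m where "m = ordH H g"
    have m: "m > 0" "of_nat m * g \<in> H" using ordH[OF less.prems(1)] m_def by auto
    have nz: "\<psi> (of_nat m * g) \<noteq> 0" using m(2) less.prems(2) unfolding pc_def by blast
    obtain w where w: "w ^ m = \<psi> (of_nat m * g)" using nth_root_ex[OF nz m(1)] by blast
    interpret e: extsetup H \<psi> g w using less.prems w m_def by unfold_locales auto
    have "UNIV - extH H g \<subset> UNIV - H" using e.H_sub e.g_in g by blast
    then have "card (UNIV - extH H g) < card (UNIV - H)" by (intro psubset_card_mono) auto
    from less.hyps[OF this e.subgrp_ext e.pc_ext] obtain \<Psi> where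
      "pc UNIV \<Psi>" "\<forall>x\<in>extH H g. \<Psi> x = extC H \<psi> g w x" by blast
    then show ?thesis using e.H_sub e.ext_extends by (intro exI[of _ \<Psi>]) auto
  qed
qed

lemma separation:
  fixes d :: "'a::{ring_1,finite}" assumes d: "d \<noteq> 0"
  shows "\<exists>\<psi>. character \<psi> \<and> \<psi> d \<noteq> 1"
proof -
  have H0: "subgrp {0::'a}" by (simp add: subgrp_def)
  have p0: "pc {0::'a} (\<lambda>_. 1)" by (simp add: pc_def)
  define m where "m = ordH {0} d"
  have m: "m > 0" "of_nat m * d \<in> {0}" using ordH[OF H0] m_def by auto
  have "m \<noteq> 1" using m(2) d by auto
  then have "m \<ge> 2" using m(1) by linarith
  then obtain w :: complex where w: "w ^ m = 1" "w \<noteq> 1" using root_unity_ne1 by blast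
  interpret e: extsetup "{0::'a}" "\<lambda>_. 1" d w using H0 p0 w m_def by unfold_locales auto
  obtain \<Psi> where P: "pc UNIV \<Psi>" "\<forall>x\<in>extH {0} d. \<Psi> x = extC {0} (\<lambda>_. 1) d w x"
    using extend_full[OF e.subgrp_ext e.pc_ext] by blast
  have "\<Psi> d = w" using P(2) e.g_in e.ext_g by simp
  moreover have "character \<Psi>" using P(1) unfolding pc_def character_def by simp
  ultimately show ?thesis using w by blast
qed




lemma lig_mem: "x \<in> left_ideal_gen x"
  unfolding left_ideal_gen_def by (auto intro: exI[of _ 1])

lemma lig_sub: "y \<in> left_ideal_gen x \<Longrightarrow> left_ideal_gen y \<subseteq> left_ideal_gen x"
  unfolding left_ideal_gen_def by (auto simp: mult.assoc[symmetric])

lemma hw_unique: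
  fixes \<omega>1 \<omega>2 :: "'a::{ring_1,finite} \<Rightarrow> real"
  assumes h1: "is_hom_weight \<omega>1" and h2: "is_hom_weight \<omega>2"
  shows "\<omega>1 x = \<omega>2 x"
proof (induction "card (left_ideal_gen x)" arbitrary: x rule: less_induct)
  case less
  show ?case
  proof (cases "x = 0")
    case True then show ?thesis using h1 h2 by (simp add: is_hom_weight_def)
  next
    case False
    define S where "S = left_ideal_gen x"
    define A where "A = {y\<in>S. left_ideal_gen y = S}"
    define B where "B = S - A"
    have fin: "finite A" "finite B" by auto
    have SAB: "S = A \<union> B" "A \<inter> B = {}" unfolding A_def B_def by auto
    have sumS: "(\<Sum>y\<in>S. \<omega> y) = (\<Sum>y\<in>A. \<omega> y) + (\<Sum>y\<in>B. \<omega> y)" for \<omega> :: "'a \<Rightarrow> real"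
      unfolding SAB(1) by (rule sum.union_disjoint[OF fin SAB(2)])
    have sumA: "(\<Sum>y\<in>A. \<omega> y) = real (card A) * \<omega> x" if "is_hom_weight \<omega>" for \<omega>
    proof -
      have "\<forall>y\<in>A. \<omega> y = \<omega> x" using that unfolding is_hom_weight_def A_def S_def by blast
      then show ?thesis by simp
    qed
    have sumB: "(\<Sum>y\<in>B. \<omega>1 y) = (\<Sum>y\<in>B. \<omega>2 y)"
    proof (rule sum.cong[OF refl])
      fix y assume y: "y \<in> B"
      then have "left_ideal_gen y \<subset> S" using lig_sub unfolding B_def A_def S_def by blast
      then have "card (left_ideal_gen y) < card (left_ideal_gen x)"
        unfolding S_def by (intro psubset_card_mono) auto
      then show "\<omega>1 y = \<omega>2 y" using less by blast
    qed
    have eqA: "real (card A) * \<omega>1 x = real (card A) * \<omega>2 x"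
    proof -
      have "(\<Sum>y\<in>S. \<omega>1 y) = real (card S)"
        using h1 False unfolding is_hom_weight_def S_def by blast
      moreover have "(\<Sum>y\<in>S. \<omega>2 y) = real (card S)"
        using h2 False unfolding is_hom_weight_def S_def by blast
      ultimately have "(\<Sum>y\<in>S. \<omega>1 y) = (\<Sum>y\<in>S. \<omega>2 y)" by (simp only:)
      then show ?thesis using sumS[of \<omega>1] sumS[of \<omega>2] sumA[OF h1] sumA[OF h2] sumB by simp
    qed
    have "x \<in> A" unfolding A_def S_def using lig_mem by blast
    then have "card A > 0" using fin card_gt_0_iff by blast
    then show ?thesis using eqA by (metis card.empty less_irrefl mult_cancel_left of_nat_eq_0_iff)
  qed
qed

lemma lig_image:
  fixes \<sigma> :: "'a::ring_1 \<Rightarrow> 'a"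
  assumes s: "surj \<sigma>" and m: "\<And>a b. \<sigma> (a * b) = \<sigma> a * \<sigma> b"
  shows "left_ideal_gen (\<sigma> x) = \<sigma> ` left_ideal_gen x"
proof
  show "left_ideal_gen (\<sigma> x) \<subseteq> \<sigma> ` left_ideal_gen x"
  proof
    fix z assume "z \<in> left_ideal_gen (\<sigma> x)"
    then obtain r where r: "z = r * \<sigma> x" unfolding left_ideal_gen_def by blast
    obtain r' where "r = \<sigma> r'" using s by (metis surjD)
    then have "z = \<sigma> (r' * x)" using r m by simp
    then show "z \<in> \<sigma> ` left_ideal_gen x" unfolding left_ideal_gen_def by blast
  qed
next
  show "\<sigma> ` left_ideal_gen x \<subseteq> left_ideal_gen (\<sigma> x)"
    unfolding left_ideal_gen_def using m by auto
qed

lemma hw_aut: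
  fixes \<omega> :: "'a::{ring_1,finite} \<Rightarrow> real" and \<sigma> :: "'a \<Rightarrow> 'a"
  assumes h: "is_hom_weight \<omega>" and b: "bij \<sigma>" and m: "\<And>a b. \<sigma> (a * b) = \<sigma> a * \<sigma> b"
    and z: "\<sigma> 0 = 0"
  shows "is_hom_weight (\<omega> \<circ> \<sigma>)"
proof -
  have s: "surj \<sigma>" using b by (rule bij_is_surj)
  have i: "inj \<sigma>" using b by (rule bij_is_inj)
  have L: "left_ideal_gen (\<sigma> x) = \<sigma> ` left_ideal_gen x" for x by (rule lig_image[OF s m])
  have h0: "\<omega> 0 = 0" and h1: "\<And>x y. left_ideal_gen x = left_ideal_gen y \<Longrightarrow> \<omega> x = \<omega> y"
    and h2: "\<And>x. x \<noteq> 0 \<Longrightarrow> (\<Sum>y\<in>left_ideal_gen x. \<omega> y) = real (card (left_ideal_gen x))"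
    using h unfolding is_hom_weight_def by blast+
  have 1: "(\<omega> \<circ> \<sigma>) 0 = 0" using h0 z by (simp only: o_def)
  have 2: "(\<omega> \<circ> \<sigma>) x = (\<omega> \<circ> \<sigma>) y" if "left_ideal_gen x = left_ideal_gen y" for x y
  proof -
    have "left_ideal_gen (\<sigma> x) = left_ideal_gen (\<sigma> y)" unfolding L using that by (rule arg_cong)
    then have "\<omega> (\<sigma> x) = \<omega> (\<sigma> y)" by (rule h1)
    then show ?thesis by (simp only: o_def)
  qed
  have 3: "(\<Sum>y\<in>left_ideal_gen x. (\<omega> \<circ> \<sigma>) y) = real (card (left_ideal_gen x))" if "x \<noteq> 0" for x
  proof -
    have nz: "\<sigma> x \<noteq> 0" using that z i unfolding inj_def by metis
    have ii: "inj_on \<sigma> (left_ideal_gen x)" using i by (rule inj_on_subset) simp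
    have "(\<Sum>y\<in>left_ideal_gen x. (\<omega> \<circ> \<sigma>) y) = (\<Sum>y\<in>\<sigma> ` left_ideal_gen x. \<omega> y)"
      by (rule sum.reindex[OF ii, symmetric])
    also have "\<dots> = real (card (left_ideal_gen (\<sigma> x)))"
      unfolding L[symmetric] by (rule h2[OF nz])
    also have "\<dots> = real (card (left_ideal_gen x))"
      unfolding L card_image[OF ii] ..
    finally show ?thesis .
  qed
  show ?thesis unfolding is_hom_weight_def using 1 2 3 by blast
qed




lemma char_zero: "character \<chi> \<Longrightarrow> \<chi> 0 = 1"
proof -
  assume c: "character \<chi>"
  then have "\<chi> (0 + 0) = \<chi> 0 * \<chi> 0" "\<chi> 0 \<noteq> 0" unfolding character_def by blast+
  then show ?thesis by simp
qed

lemma char_neg: "character \<chi> \<Longrightarrow> \<chi> (- x) = inverse (\<chi> x)"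
proof -
  assume c: "character \<chi>"
  then have "\<chi> (- x + x) = \<chi> (- x) * \<chi> x" "\<chi> x \<noteq> 0" unfolding character_def by blast+
  then show ?thesis using char_zero[OF c] by (simp add: field_simps)
qed

lemma char_diff: "character \<chi> \<Longrightarrow> \<chi> (x - y) = \<chi> x / \<chi> y"
proof -
  assume c: "character \<chi>"
  have "\<chi> (x + - y) = \<chi> x * \<chi> (- y)" using c unfolding character_def by blast
  then show ?thesis using char_neg[OF c] by (simp add: field_simps)
qed

lemma char_right: "character \<chi> \<Longrightarrow> character (\<lambda>v. \<chi> (v * s))"
  unfolding character_def by (simp add: distrib_right)

lemma char_left: "character \<chi> \<Longrightarrow> character (\<lambda>v. \<chi> (b * v))"
  unfolding character_def by (simp add: distrib_left)

lemma char_prod: "character \<phi> \<Longrightarrow> character \<psi> \<Longrightarrow> character (\<lambda>v. \<phi> v * \<psi> v)"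
  unfolding character_def by (simp add: mult_ac)

context
  fixes \<chi> :: "'a::{ring_1,finite} \<Rightarrow> complex"
  assumes gen: "generating_character \<chi>"
begin

abbreviation "C \<equiv> range (\<lambda>s v. \<chi> (v * s))"

lemma chi_char: "character \<chi>" using gen unfolding generating_character_def by blast

lemma C_char: "\<psi> \<in> C \<Longrightarrow> character \<psi>"
  using char_right[OF chi_char] by blast

lemma char_C: "character \<psi> \<Longrightarrow> \<psi> \<in> C"
  using gen unfolding generating_character_def by blast

lemma orth1:
  assumes x: "x \<noteq> 0" shows "(\<Sum>\<psi>\<in>C. \<psi> x) = 0"
proof -
  obtain \<psi>0 where p0: "character \<psi>0" "\<psi>0 x \<noteq> 1" using separation[OF x] by blast
  define T where "T = (\<lambda>\<psi> v. \<psi>0 v * \<psi> v)"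
  have fC: "finite C" by simp
  have TC: "T ` C \<subseteq> C" unfolding T_def using char_C char_prod[OF p0(1)] C_char by blast
  have inj: "inj_on T C"
  proof
    fix \<psi> \<phi> assume "T \<psi> = T \<phi>"
    then have "\<forall>v. \<psi>0 v * \<psi> v = \<psi>0 v * \<phi> v" unfolding T_def by meson
    moreover have "\<forall>v. \<psi>0 v \<noteq> 0" using p0 unfolding character_def by blast
    ultimately show "\<psi> = \<phi>" by auto
  qed
  have eq: "T ` C = C" using endo_inj_surj[OF fC TC inj] .
  have "(\<Sum>\<psi>\<in>C. \<psi> x) = (\<Sum>\<psi>\<in>T ` C. \<psi> x)" using eq by simp
  also have "\<dots> = (\<Sum>\<psi>\<in>C. T \<psi> x)" using sum.reindex[OF inj] by simp
  also have "\<dots> = \<psi>0 x * (\<Sum>\<psi>\<in>C. \<psi> x)" unfolding T_def by (simp add: sum_distrib_left)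
  finally show ?thesis using p0(2) by (metis mult_cancel_right1 mult.commute)
qed

lemma orth2:
  assumes c: "character \<psi>" and n: "\<psi> \<noteq> (\<lambda>_. 1)"
  shows "(\<Sum>x\<in>UNIV. \<psi> x) = 0"
proof -
  obtain y where y: "\<psi> y \<noteq> 1" using n by blast
  have "(\<Sum>x\<in>UNIV. \<psi> x) = (\<Sum>x\<in>UNIV. \<psi> (x + y))"
    by (rule sum.reindex_bij_witness[of _ "\<lambda>x. x + y" "\<lambda>x. x - y"]) auto
  also have "\<dots> = \<psi> y * (\<Sum>x\<in>UNIV. \<psi> x)"
    using c unfolding character_def by (simp add: sum_distrib_left mult.commute)
  finally show ?thesis using y by (metis mult_cancel_right1 mult.commute)
qed

lemma card_C: "card C = card (UNIV :: 'a set)"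
proof -
  have z: "\<psi> 0 = 1" if "\<psi> \<in> C" for \<psi> using char_zero[OF C_char[OF that]] .
  have triv: "(\<lambda>_. 1) \<in> C" using char_zero[OF chi_char] by (auto intro!: image_eqI[of _ _ 0])
  have "(\<Sum>x\<in>UNIV. \<Sum>\<psi>\<in>C. \<psi> x) = (\<Sum>x::'a\<in>UNIV. if x = 0 then of_nat (card C) else 0)"
  proof (rule sum.cong[OF refl])
    fix x :: 'a show "(\<Sum>\<psi>\<in>C. \<psi> x) = (if x = 0 then of_nat (card C) else 0)"
    proof (cases "x = 0")
      case True
      have "(\<Sum>\<psi>\<in>C. \<psi> 0) = (\<Sum>\<psi>\<in>C. 1)" by (rule sum.cong) (auto simp: z)
      then show ?thesis using True by simp
    next
      case False then show ?thesis using orth1[of x] by simp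
    qed
  qed
  also have "\<dots> = of_nat (card C)" by simp
  finally have 1: "(\<Sum>x\<in>UNIV. \<Sum>\<psi>\<in>C. \<psi> x) = of_nat (card C)" .
  have "(\<Sum>\<psi>\<in>C. \<Sum>x\<in>UNIV. \<psi> x) = (\<Sum>\<psi>\<in>C. if \<psi> = (\<lambda>_. 1) then of_nat (card (UNIV::'a set)) else 0)"
  proof (rule sum.cong[OF refl])
    fix \<psi> assume "\<psi> \<in> C"
    then show "(\<Sum>x\<in>UNIV. \<psi> x) = (if \<psi> = (\<lambda>_. 1) then of_nat (card (UNIV::'a set)) else 0)"
      using orth2[OF C_char] by auto
  qed
  also have "\<dots> = of_nat (card (UNIV::'a set))" using triv by (simp add: sum.delta)
  finally have 2: "(\<Sum>\<psi>\<in>C. \<Sum>x\<in>UNIV. \<psi> x) = of_nat (card (UNIV::'a set))" .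
  have "(of_nat (card C) :: complex) = of_nat (card (UNIV::'a set))"
    using 1 2 sum.swap[of "\<lambda>x \<psi>. \<psi> x" C UNIV] by simp
  then show ?thesis by (simp only: of_nat_eq_iff)
qed

lemma inj_C: "inj (\<lambda>s v. \<chi> (v * s))"
  using eq_card_imp_inj_on[of UNIV "\<lambda>s v. \<chi> (v * s)"] card_C by simp

lemma faith_right: "(\<And>v. \<chi> (v * r) = \<chi> (v * r')) \<Longrightarrow> r = r'"
  using inj_C unfolding inj_def by (metis ext)

lemma faith_left:
  assumes "\<And>v. \<chi> (b * v) = \<chi> (b' * v)" shows "b = b'"
proof (rule ccontr)
  assume "b \<noteq> b'"
  then have "b - b' \<noteq> 0" by simp
  then obtain \<psi> where p: "character \<psi>" "\<psi> (b - b') \<noteq> 1" using separation by blast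
  obtain s where "\<psi> = (\<lambda>v. \<chi> (v * s))" using char_C[OF p(1)] by blast
  then have "\<psi> (b - b') = \<chi> (b * s - b' * s)" by (simp add: left_diff_distrib)
  also have "\<dots> = \<chi> (b * s) / \<chi> (b' * s)" using char_diff[OF chi_char] .
  also have "\<dots> = 1" using assms[of s] chi_char unfolding character_def by simp
  finally show False using p(2) by simp
qed

definition sig :: "'a \<Rightarrow> 'a" where
  "sig b = (SOME r. \<forall>v. \<chi> (b * v) = \<chi> (v * r))"

lemma sig_spec: "\<chi> (b * v) = \<chi> (v * sig b)"
proof -
  obtain r where "(\<lambda>v. \<chi> (b * v)) = (\<lambda>v. \<chi> (v * r))"
    using char_C[OF char_left[OF chi_char, of b]] by blast
  then have "\<exists>r. \<forall>v. \<chi> (b * v) = \<chi> (v * r)" by metis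
  then have "\<forall>v. \<chi> (b * v) = \<chi> (v * sig b)" unfolding sig_def by (rule someI_ex)
  then show ?thesis by blast
qed

lemma sig_mult: "sig (a * b) = sig a * sig b"
proof (rule faith_right[symmetric])
  fix v
  have "\<chi> (v * (sig a * sig b)) = \<chi> ((v * sig a) * sig b)" by (simp only: mult.assoc)
  also have "\<dots> = \<chi> (b * (v * sig a))" by (rule sig_spec[symmetric])
  also have "\<dots> = \<chi> ((b * v) * sig a)" by (simp only: mult.assoc)
  also have "\<dots> = \<chi> (a * (b * v))" by (rule sig_spec[symmetric])
  also have "\<dots> = \<chi> ((a * b) * v)" by (simp only: mult.assoc)
  also have "\<dots> = \<chi> (v * sig (a * b))" by (rule sig_spec)
  finally show "\<chi> (v * (sig a * sig b)) = \<chi> (v * sig (a * b))" .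
qed

lemma sig_zero: "sig 0 = 0"
proof (rule faith_right)
  fix v
  have "\<chi> (v * sig 0) = \<chi> (0 * v)" by (rule sig_spec[symmetric])
  then show "\<chi> (v * sig 0) = \<chi> (v * 0)" by (simp only: mult_zero_left mult_zero_right)
qed

lemma sig_inj: "inj sig"
proof
  fix a b assume e: "sig a = sig b"
  show "a = b"
  proof (rule faith_left)
    fix v
    have "\<chi> (a * v) = \<chi> (v * sig a)" by (rule sig_spec)
    also have "\<dots> = \<chi> (v * sig b)" using e by (simp only:)
    also have "\<dots> = \<chi> (b * v)" by (rule sig_spec[symmetric])
    finally show "\<chi> (a * v) = \<chi> (b * v)" .
  qed
qed

lemma sig_bij: "bij sig"
  using sig_inj finite_UNIV_inj_surj[of sig] by (simp add: bij_def)

lemma chi_sig: "\<chi> (sig a) = \<chi> a"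
proof -
  have "\<chi> (a * 1) = \<chi> (1 * sig a)" by (rule sig_spec)
  then show ?thesis by (simp only: mult_1_left mult_1_right)
qed

end




theorem theorem5p12:
  fixes \<omega> :: "'a::{ring_1,finite} \<Rightarrow> real" and \<chi> :: "'a \<Rightarrow> complex"
  assumes "frobenius_ring TYPE('a)"
    and "is_hom_weight \<omega>"
    and "generating_character \<chi>"
  shows "(\<forall>P\<in>level_partition \<omega>. \<forall>b. (\<Sum>a\<in>P. \<chi> (a * b)) = (\<Sum>a\<in>P. \<chi> (b * a)))
         \<and> left_dual_rel (level_partition \<omega>) \<chi> = right_dual_rel (level_partition \<omega>) \<chi>"
proof -
  note g = assms(3)
  let ?s = "sig \<chi>"
  have hs: "is_hom_weight (\<omega> \<circ> ?s)"
    by (rule hw_aut[OF assms(2) sig_bij[OF g] sig_mult[OF g] sig_zero[OF g]])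
  have ws: "\<omega> (?s a) = \<omega> a" for a
    using hw_unique[OF hs assms(2), of a] by (simp only: o_def)
  have key: "(\<Sum>a\<in>P. \<chi> (a * b)) = (\<Sum>a\<in>P. \<chi> (b * a))" if P: "P \<in> level_partition \<omega>" for P b
  proof -
    obtain t where t: "P = {a. \<omega> a = t}" using P unfolding level_partition_def by blast
    have inj: "inj_on ?s P" using sig_inj[OF g] by (rule inj_on_subset) simp
    have im: "?s ` P = P"
    proof
      show "?s ` P \<subseteq> P" unfolding t using ws by auto
    next
      show "P \<subseteq> ?s ` P"
      proof
        fix a assume a: "a \<in> P"
        obtain a' where a': "a = ?s a'" using bij_is_surj[OF sig_bij[OF g]] by (metis surjD)
        then have "a' \<in> P" using a ws unfolding t by simp
        then show "a \<in> ?s ` P" using a' by blast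
      qed
    qed
    have "(\<Sum>a\<in>P. \<chi> (a * b)) = (\<Sum>a\<in>P. \<chi> (?s a * ?s b))"
    proof (rule sum.cong[OF refl])
      fix a
      have "\<chi> (a * b) = \<chi> (?s (a * b))" by (rule chi_sig[OF g, symmetric])
      then show "\<chi> (a * b) = \<chi> (?s a * ?s b)" by (simp only: sig_mult[OF g])
    qed
    also have "\<dots> = (\<Sum>a\<in>?s ` P. \<chi> (a * ?s b))"
      using sum.reindex[OF inj, of "\<lambda>a. \<chi> (a * ?s b)"] by (simp add: o_def)
    also have "\<dots> = (\<Sum>a\<in>P. \<chi> (a * ?s b))" unfolding im ..
    also have "\<dots> = (\<Sum>a\<in>P. \<chi> (b * a))"
      by (rule sum.cong[OF refl]) (rule sig_spec[OF g, symmetric])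
    finally show ?thesis .
  qed
  show ?thesis
  proof
    show "\<forall>P\<in>level_partition \<omega>. \<forall>b. (\<Sum>a\<in>P. \<chi> (a * b)) = (\<Sum>a\<in>P. \<chi> (b * a))"
      using key by blast
    show "left_dual_rel (level_partition \<omega>) \<chi> = right_dual_rel (level_partition \<omega>) \<chi>"
      unfolding left_dual_rel_def right_dual_rel_def using key by (intro ext) simp
  qed
qed


end
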